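(* Let $n\ge 2$ be an integer. Suppose that for all integers $m,k$ with $2\le m\le n$, $2\le k\le 2^{m-1}+1$ and $k$ even one has $$v_2\big(s(2^n,2^m-k)\big)=2^n-2^m-(n-m)(2^m-k)+m-1-v_2(k).$$ Then for every integer $i$ with $1\le i\le 2^{n-1}$, $$v_2\big(s(2^n,2i-1)\big)=v_2\big(s(2^n,2i)\big)+n-1.$$
   Context: The (unsigned) Stirling numbers of the first kind $s(n,k)$ are defined by $x(x+1)\cdots(x+n-1)=\sum_{k=0}^n s(n,k)x^k$. $v_2$ denotes the $2$-adic valuation. *)

theory Defs
  imports "HOL-Combinatorics.Stirling" "HOL-Computational_Algebra.Primes"
begin

end

theory Submission
  imports Defs "HOL-Computational_Algebra.Polynomial"
begin

lemma coeff_poch: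
  "coeff (pochhammer [:0, (1::int):] m) l = int (stirling m l)"
proof -
  have X: "[:0, (1::int):] ^ k = monom 1 k" for k
    by (induction k) (simp_all add: monom_Suc)
  have "pochhammer [:0, (1::int):] m = (\<Sum>k\<le>m. of_nat (stirling m k) * [:0,1:]^k)"
    by (simp add: stirling_pochhammer)
  then have "coeff (pochhammer [:0, (1::int):] m) l = (\<Sum>k\<le>m. of_nat (stirling m k) * (if k = l then 1 else 0))"
    by (simp add: coeff_sum X of_nat_poly coeff_monom)
  also have "\<dots> = int (stirling m l)"
    by (cases "l \<le> m") (auto simp: if_distrib cong: if_cong)
  finally show ?thesis .
qed

lemma coeff_Qpow:
  "coeff ([:0, c, 1:]^r :: int poly) t = (if r \<le> t \<and> t \<le> 2*r then int (r choose (t - r)) * c^(2*r - t) else 0)"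
proof -
  have eq: "[:0, c, 1:] = monom (1::int) 1 * [:c,1:]" by (simp add: monom_Suc)
  have "[:0, c, 1:]^r = monom 1 r * [:c,1:]^r"
    unfolding eq power_mult_distrib monom_power by simp
  then have e: "coeff ([:0, c, 1:]^r) t = (if t < r then 0 else coeff ([:c,1:]^r) (t - r))"
    by (simp add: coeff_monom_mult)
  show ?thesis
  proof (cases "r \<le> t \<and> t \<le> 2*r")
    case True
    then have "t - r \<le> r" by linarith
    from coeff_linear_poly_power[OF this, of c 1] True e show ?thesis
      by (simp add: mult_2)
  next
    case False
    show ?thesis
    proof (cases "t < r")
      case True then show ?thesis using e by simp
    next
      case F: False
      with False have "t - r > degree ([:c, (1::int):]^r)" by (simp add: degree_linear_power)
      then show ?thesis using e F False by (simp add: coeff_eq_0)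
    qed
  qed
qed

lemma coeff_B:
  "coeff ([:0, c, 1:] * p :: int poly) (Suc l) = c * coeff p l + (if l = 0 then 0 else coeff p (l - 1))"
  by (cases l) simp_all

lemma factor:
  assumes "h \<ge> 1"
  shows "pochhammer [:0, (1::int):] (2*h) = [:0, int h, 1:] * (\<Prod>j\<in>{1..<h}. [:int (j*(2*h-j)), int (2*h), 1:])"
proof -
  define f where "f i = [:int i, (1::int):]" for i
  have "pochhammer [:0, (1::int):] (2*h) = prod f {0..<2*h}"
    by (simp add: pochhammer_prod f_def of_nat_poly)
  also have "\<dots> = prod f {0..<h} * prod f {h..<2*h}"
    by (simp add: prod.atLeastLessThan_concat)
  also have "prod f {0..<h} = f 0 * prod f {1..<h}"
    using assms by (simp add: prod.atLeast_Suc_lessThan)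
  also have "prod f {h..<2*h} = f h * prod f {Suc h..<2*h}"
    using assms by (simp add: prod.atLeast_Suc_lessThan)
  also have "prod f {Suc h..<2*h} = (\<Prod>j\<in>{1..<h}. f (2*h - j))"
    by (rule prod.reindex_bij_witness[of _ "\<lambda>j. 2*h - j" "\<lambda>j. 2*h - j"]) auto
  also have "f 0 * prod f {1..<h} * (f h * (\<Prod>j\<in>{1..<h}. f (2*h - j)))
      = (f 0 * f h) * (\<Prod>j\<in>{1..<h}. f j * f (2*h - j))"
    by (simp add: prod.distrib mult_ac)
  also have "f 0 * f h = [:0, int h, 1:]" by (simp add: f_def)
  also have "(\<Prod>j\<in>{1..<h}. f j * f (2*h - j)) = (\<Prod>j\<in>{1..<h}. [:int (j*(2*h-j)), int (2*h), 1:])"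
    by (rule prod.cong) (auto simp: f_def of_nat_diff)
  finally show ?thesis .
qed

lemma pcompose_as_sum:
  "pcompose p q = (\<Sum>r\<le>degree p. smult (coeff p r) (q ^ r))"
proof -
  have "pcompose p q = poly (map_poly (\<lambda>x. [:x:]) p) q" by (rule pcompose_altdef)
  also have "\<dots> = (\<Sum>r\<le>degree p. [:coeff p r:] * q ^ r)"
    by (simp add: poly_altdef degree_map_poly coeff_map_poly)
  finally show ?thesis by simp
qed

lemma coeff_identity:
  assumes "h \<ge> 1"
  shows "int (stirling (2*h) l) = (\<Sum>r\<le>degree (\<Prod>j\<in>{1..<h}. [:int (j*(2*h-j)), 1:]).
     coeff (\<Prod>j\<in>{1..<h}. [:int (j*(2*h-j)), 1:]) r * coeff ([:0, int h, 1:] * [:0, int (2*h), 1:]^r) l)"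
proof -
  define Kp where "Kp = (\<Prod>j\<in>{1..<h}. [:int (j*(2*h-j)), (1::int):])"
  define Q where "Q = [:0, int (2*h), (1::int):]"
  have "pcompose Kp Q = (\<Prod>j\<in>{1..<h}. [:int (j*(2*h-j)), int (2*h), 1:])"
    by (simp add: Kp_def Q_def pcompose_prod pcompose_pCons)
  then have "pochhammer [:0, (1::int):] (2*h) = [:0, int h, 1:] * pcompose Kp Q"
    using factor[OF assms] by simp
  also have "\<dots> = (\<Sum>r\<le>degree Kp. smult (coeff Kp r) ([:0, int h, 1:] * Q ^ r))"
    by (simp add: pcompose_as_sum sum_distrib_left)
  finally have "coeff (pochhammer [:0, (1::int):] (2*h)) l = (\<Sum>r\<le>degree Kp. coeff Kp r * coeff ([:0, int h, 1:] * Q ^ r) l)"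
    by (simp only: coeff_sum coeff_smult)
  then show ?thesis by (simp add: coeff_poch Kp_def Q_def)
qed

lemma degree_Kp:
  assumes "h \<ge> 1"
  shows "degree (\<Prod>j\<in>{1..<h}. [:int (j*(2*h-j)), (1::int):]) < h"
proof -
  have "degree (\<Prod>j\<in>{1..<h}. [:int (j*(2*h-j)), (1::int):]) \<le> (\<Sum>j\<in>{1..<h}. 1)"
    using degree_prod_sum_le[of "{1..<h}" "\<lambda>j. [:int (j*(2*h-j)), (1::int):]"] by (simp add: o_def)
  also have "\<dots> = h - 1" by simp
  finally show ?thesis using assms by linarith
qed

lemma c_dvd: "(2::int)^(n * (2*r - t)) dvd coeff ([:0, 2^n, 1:]^r) t"
proof -
  have "(2::int)^(n * (2*r - t)) = (2^n)^(2*r - t)" by (simp add: power_mult)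
  then show ?thesis by (simp add: coeff_Qpow)
qed

lemma c_top: "coeff ([:0, c, 1:]^i :: int poly) (2*i) = 1"
  by (simp add: coeff_Qpow mult_2)

lemma c_top1: "coeff ([:0, c, 1:]^i :: int poly) (Suc (2*i)) = 0"
  by (simp add: coeff_Qpow)

lemma c_top2: "i \<ge> 1 \<Longrightarrow> coeff ([:0, c, 1:]^i :: int poly) (2*i - Suc 0) = int i * c"
proof -
  assume i: "i \<ge> 1"
  have b: "i choose (i - Suc 0) = i" using binomial_symmetric[of 1 i] i by simp
  have "2*i - Suc 0 - i = i - Suc 0" "2*i - (2*i - Suc 0) = 1" using i by auto
  moreover have "i \<le> 2*i - Suc 0" "2*i - Suc 0 \<le> 2*i" using i by auto
  ultimately show ?thesis by (simp add: coeff_Qpow b)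
qed

lemma A_lead: "coeff ([:0, c, 1:] * [:0, d, 1:]^i :: int poly) (2*i+2) = 1"
proof -
  have "2*i+2 = Suc (2*i+1)" by simp
  then show ?thesis by (simp only: coeff_B) (simp add: c_top c_top1)
qed

lemma A_sub: "coeff ([:0, c, 1:] * [:0, d, 1:]^i :: int poly) (2*i+1) = c + int i * d"
proof -
  have "2*i+1 = Suc (2*i)" by simp
  then show ?thesis by (simp only: coeff_B) (auto simp add: c_top c_top2)
qed

lemma A_low1: "r < i \<Longrightarrow> coeff ([:0, c, 1:] * [:0, d, 1:]^r :: int poly) (2*i+2) = 0"
proof -
  assume "r < i"
  have "2*i+2 = Suc (2*i+1)" by simp
  then show ?thesis using \<open>r < i\<close> by (simp only: coeff_B) (simp add: coeff_Qpow)
qed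

lemma A_low2: "r < i \<Longrightarrow> coeff ([:0, c, 1:] * [:0, d, 1:]^r :: int poly) (2*i+1) = 0"
proof -
  assume "r < i"
  have "2*i+1 = Suc (2*i)" by simp
  then show ?thesis using \<open>r < i\<close> by (simp only: coeff_B) (simp add: coeff_Qpow, arith)
qed

lemma dvd_helper: "(2::int)^a dvd x \<Longrightarrow> a' \<le> a + b \<Longrightarrow> (2::int)^a' dvd 2^b * x"
proof -
  assume "(2::int)^a dvd x" "a' \<le> a + b"
  then have "(2::int)^a' dvd 2^(a+b)" by (simp add: le_imp_power_dvd)
  also have "(2::int)^(a+b) = 2^b * 2^a" by (simp add: power_add)
  also have "\<dots> dvd 2^b * x" using \<open>(2::int)^a dvd x\<close> by simp
  finally show ?thesis .
qed

lemma A_dvd1: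
  "(2::int)^(2*m*e + 2*m + 2*e + 1) dvd coeff ([:0, 2^m, 1:] * [:0, 2^Suc m, 1:]^(i + Suc e)) (2*i+2)"
proof -
  have "2*i+2 = Suc (2*i+1)" by simp
  then have eq: "coeff ([:0, 2^m, 1:] * [:0, 2^Suc m, 1:]^(i + Suc e)) (2*i+2)
     = 2^m * coeff ([:0, 2^Suc m, (1::int):]^(i + Suc e)) (2*i+1) + coeff ([:0, 2^Suc m, (1::int):]^(i + Suc e)) (2*i)"
    by (simp only: coeff_B) simp
  have d1: "(2::int)^(Suc m * (2*(i + Suc e) - (2*i+1))) dvd coeff ([:0, 2^Suc m, (1::int):]^(i + Suc e)) (2*i+1)"
    by (rule c_dvd)
  have d2: "(2::int)^(Suc m * (2*(i + Suc e) - (2*i))) dvd coeff ([:0, 2^Suc m, (1::int):]^(i + Suc e)) (2*i)"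
    by (rule c_dvd)
  have "(2::int)^(2*m*e + 2*m + 2*e + 1) dvd 2^m * coeff ([:0, 2^Suc m, (1::int):]^(i + Suc e)) (2*i+1)"
    by (rule dvd_helper[OF d1]) (simp add: algebra_simps)
  moreover have "(2::int)^(2*m*e + 2*m + 2*e + 1) dvd 2^0 * coeff ([:0, 2^Suc m, (1::int):]^(i + Suc e)) (2*i)"
    by (rule dvd_helper[OF d2]) (simp add: algebra_simps)
  ultimately show ?thesis unfolding eq by simp
qed

lemma A_dvd2:
  "(2::int)^(2*m*e + 3*m + 2*e + 2) dvd coeff ([:0, 2^m, 1:] * [:0, 2^Suc m, 1:]^(i + Suc e)) (2*i+1)"
proof -
  have "2*i+1 = Suc (2*i)" by simp
  then have eq: "coeff ([:0, 2^m, 1:] * [:0, 2^Suc m, 1:]^(i + Suc e)) (2*i+1)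
     = 2^m * coeff ([:0, 2^Suc m, (1::int):]^(i + Suc e)) (2*i) + (if i = 0 then 0 else 2^0 * coeff ([:0, 2^Suc m, (1::int):]^(i + Suc e)) (2*i - 1))"
    by (simp only: coeff_B) simp
  have d1: "(2::int)^(Suc m * (2*(i + Suc e) - (2*i))) dvd coeff ([:0, 2^Suc m, (1::int):]^(i + Suc e)) (2*i)"
    by (rule c_dvd)
  have d2: "(2::int)^(Suc m * (2*(i + Suc e) - (2*i - 1))) dvd coeff ([:0, 2^Suc m, (1::int):]^(i + Suc e)) (2*i - 1)"
    by (rule c_dvd)
  have "(2::int)^(2*m*e + 3*m + 2*e + 2) dvd 2^m * coeff ([:0, 2^Suc m, (1::int):]^(i + Suc e)) (2*i)"
    by (rule dvd_helper[OF d1]) (simp add: algebra_simps)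
  moreover have "i \<noteq> 0 \<Longrightarrow> (2::int)^(2*m*e + 3*m + 2*e + 2) dvd 2^0 * coeff ([:0, 2^Suc m, (1::int):]^(i + Suc e)) (2*i - 1)"
  proof (rule dvd_helper[OF d2])
    assume "i \<noteq> 0"
    then have "2*(i + Suc e) - (2*i - 1) = 2*e + 3" by simp
    then show "2*m*e + 3*m + 2*e + 2 \<le> Suc m * (2*(i + Suc e) - (2*i - 1)) + 0" by (simp add: algebra_simps)
  qed
  ultimately show ?thesis unfolding eq by auto
qed

definition ex2 :: "nat \<Rightarrow> int \<Rightarrow> bool" where
  "ex2 e x \<longleftrightarrow> (\<exists>u. odd u \<and> x = 2^e * u)"

lemma ex2_iff: "ex2 e x \<longleftrightarrow> (2::int)^e dvd x \<and> \<not> (2::int)^Suc e dvd x"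
proof
  assume "ex2 e x"
  then obtain u where u: "odd u" "x = 2^e * u" by (auto simp: ex2_def)
  have "\<not> (2::int)^Suc e dvd 2^e * u"
  proof
    assume "(2::int)^Suc e dvd 2^e * u"
    then have "2^e * 2 dvd 2^e * u" by (simp add: mult.commute)
    then have "(2::int) dvd u" using dvd_mult_cancel_left[of "2^e" 2 u] by simp
    with u show False by simp
  qed
  with u show "(2::int)^e dvd x \<and> \<not> (2::int)^Suc e dvd x" by simp
next
  assume a: "(2::int)^e dvd x \<and> \<not> (2::int)^Suc e dvd x"
  then obtain u where u: "x = 2^e * u" by (auto elim: dvdE)
  have "odd u"
  proof
    assume "even u"
    then obtain w where "u = 2*w" by (auto elim: evenE)
    then have "x = 2^Suc e * w" using u by simp
    with a show False by simp
  qed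
  with u show "ex2 e x" by (auto simp: ex2_def)
qed

lemma ex2_mult: "ex2 a x \<Longrightarrow> ex2 b y \<Longrightarrow> ex2 (a+b) (x*y)"
  unfolding ex2_def
proof (elim exE conjE)
  fix u v assume "odd u" "x = 2^a*u" "odd v" "y = 2^b*v"
  then show "\<exists>w. odd w \<and> x * y = 2^(a+b) * w"
    by (intro exI[of _ "u*v"]) (simp add: power_add mult_ac)
qed

lemma ex2_add: "ex2 e a \<Longrightarrow> (2::int)^Suc e dvd b \<Longrightarrow> ex2 e (a + b)"
  unfolding ex2_iff
proof (intro conjI)
  assume a: "(2::int)^e dvd a \<and> \<not> (2::int)^Suc e dvd a" and b: "(2::int)^Suc e dvd b"
  have "(2::int)^e dvd b" using b by (rule dvd_trans[rotated]) (simp add: le_imp_power_dvd)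
  then show "(2::int)^e dvd a + b" using a by simp
  show "\<not> (2::int)^Suc e dvd a + b"
  proof
    assume "(2::int)^Suc e dvd a + b"
    then have "(2::int)^Suc e dvd (a + b) - b" using b by (rule dvd_diff)
    with a show False by simp
  qed
qed

lemma ex2_multiplicity: "ex2 e (int x) \<Longrightarrow> multiplicity (2::nat) x = e"
proof -
  assume "ex2 e (int x)"
  then have a: "(2::int)^e dvd int x" "\<not> (2::int)^Suc e dvd int x" by (auto simp: ex2_iff)
  have c: "(2::int)^j = int (2^j)" for j by simp
  from a have "(2::nat)^e dvd x" "\<not> (2::nat)^Suc e dvd x"
    unfolding c int_dvd_int_iff by auto
  then show ?thesis by (rule multiplicity_eqI)
qed

lemma multiplicity_ex2: "x \<noteq> 0 \<Longrightarrow> ex2 (multiplicity (2::nat) x) (int x)"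
proof -
  assume x: "x \<noteq> 0"
  have c: "(2::int)^j = int (2^j)" for j by simp
  have "(2::nat)^multiplicity 2 x dvd x" by (rule multiplicity_dvd)
  moreover have "\<not> (2::nat)^Suc (multiplicity 2 x) dvd x"
    using power_dvd_iff_le_multiplicity[of x 2 "Suc (multiplicity 2 x)"] x by simp
  ultimately show ?thesis unfolding ex2_iff c int_dvd_int_iff by simp
qed

lemma stirling_pos: "1 \<le> k \<Longrightarrow> k \<le> m \<Longrightarrow> stirling m k > 0"
proof (induction m arbitrary: k)
  case 0 then show ?case by simp
next
  case (Suc m)
  then obtain k' where k: "k = Suc k'" by (cases k) auto
  show ?case
  proof (cases k')
    case 0
    have "stirling (Suc m) (Suc 0) = fact m" by (rule stirling_Suc_n_1)
    then show ?thesis using k 0 by simp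
  next
    case (Suc k'')
    then have "stirling m k' > 0" using Suc.IH[of k'] Suc.prems k by simp
    then show ?thesis using k by simp
  qed
qed

lemma mult_le_of_less: "0 < x \<Longrightarrow> x < 2^p \<Longrightarrow> multiplicity (2::nat) x < p"
proof -
  assume x: "0 < x" "x < 2^p"
  have "2 ^ multiplicity 2 x dvd x" by (rule multiplicity_dvd)
  then have "2 ^ multiplicity 2 x \<le> x" using x by (simp add: dvd_imp_le)
  then have "(2::nat) ^ multiplicity 2 x < 2^p" using x by linarith
  then show ?thesis by simp
qed

lemma mult_even_ge: "even (x::nat) \<Longrightarrow> x \<noteq> 0 \<Longrightarrow> multiplicity (2::nat) x \<ge> 1"
  using multiplicity_gt_zero_iff[of x 2] by simp

theorem lemma2p5:
  fixes n :: nat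
  assumes "n \<ge> 2"
    and hyp: "\<And>m k. 2 \<le> m \<Longrightarrow> m \<le> n \<Longrightarrow> 2 \<le> k \<Longrightarrow> k \<le> 2 ^ (m - 1) + 1 \<Longrightarrow> even k \<Longrightarrow>
      int (multiplicity (2::nat) (stirling (2 ^ n) (2 ^ m - k)))
        = 2 ^ n - 2 ^ m - (int n - int m) * (2 ^ m - int k) + int m - 1 - int (multiplicity (2::nat) k)"
  shows "\<forall>i. 1 \<le> i \<and> i \<le> 2 ^ (n - 1) \<longrightarrow>
      multiplicity (2::nat) (stirling (2 ^ n) (2 * i - 1))
        = multiplicity (2::nat) (stirling (2 ^ n) (2 * i)) + (n - 1)"
proof -
  obtain m where n: "n = Suc m" and m1: "m \<ge> 1" using assms(1) by (cases n) auto
  define h where "h = (2::nat)^m"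
  have N: "(2::nat)^n = 2*h" by (simp add: n h_def)
  have Ni: "(2::int)^n = int (2*h)" by (simp add: n h_def)
  have h2: "h \<ge> 2" using m1 unfolding h_def using power_increasing[of 1 m "2::nat"] by simp
  define Kp where "Kp = (\<Prod>j\<in>{1..<h}. [:int (j*(2*h-j)), (1::int):])"
  define k where "k r = coeff Kp r" for r
  define A where "A r l = coeff ([:0, (2::int)^m, 1:] * [:0, 2^Suc m, 1:]^r) l" for r l
  have degK: "degree Kp < h" unfolding Kp_def using degree_Kp[of h] h2 by simp
  have sid0: "int (stirling (2*h) l) = (\<Sum>r\<le>degree Kp. k r * A r l)" for l
  proof -
    have e1: "int h = (2::int)^m" "int (2*h) = (2::int)^Suc m" by (simp_all add: h_def)
    show ?thesis using coeff_identity[of h l] h2 unfolding k_def A_def Kp_def e1 by simp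
  qed
  have sid: "int (stirling (2*h) l) = (\<Sum>r<h. k r * A r l)" for l
  proof -
    have "(\<Sum>r\<le>degree Kp. k r * A r l) = (\<Sum>r<h. k r * A r l)"
    proof (rule sum.mono_neutral_left)
      show "\<forall>r\<in>{..<h} - {..degree Kp}. k r * A r l = 0"
        by (auto simp: k_def coeff_eq_0)
    qed (use degK in auto)
    then show ?thesis using sid0 by simp
  qed
  define W where "W i = multiplicity (2::nat) (stirling (2*h) (2*i+2))" for i
  have Wex: "ex2 (W i) (int (stirling (2*h) (2*i+2)))" if "i < h" for i
  proof -
    have "stirling (2*h) (2*i+2) > 0" by (rule stirling_pos) (use that in auto)
    then show ?thesis unfolding W_def by (intro multiplicity_ex2) simp
  qed
  have hypJ: "int (multiplicity (2::nat) (stirling (2*h) J)) =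
       int (2*h) - 2^M - (int n - int M) * int J + int M - 1 - int (multiplicity (2::nat) kk)"
    if "2 \<le> M" "M \<le> n" "2 \<le> kk" "kk \<le> 2^(M-1)" "even kk" "J + kk = 2^M" for M kk J
  proof -
    have J: "J = 2^M - kk" using that by simp
    have "int J = 2^M - int kk" using that(6) by (metis add_diff_cancel_right' of_nat_add of_nat_numeral of_nat_power)
    then show ?thesis using hyp[of M kk] that unfolding J N Ni by simp
  qed
  have step: "W i \<le> W (Suc i) + 2*m" if "Suc i < h" for i
  proof -
    obtain p where p: "2^p \<le> 2*i+2" "2*i+2 < 2^(p+1)"
      using ex_power_ivl1[of 2 "2*i+2"] by auto
    have p1: "p \<ge> 1"
    proof (rule ccontr)
      assume "\<not> p \<ge> 1" then have "p = 0" by simp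
      with p show False by simp
    qed
    have "(2::nat)^p < 2^n" using p(1) that N by linarith
    then have pn: "p < n" by simp
    define M where "M = Suc p"
    define kk where "kk = 2^M - (2*i+2)"
    have PM: "(2::nat)^M = 2 * 2^p" by (simp add: M_def)
    have pp: "(2::nat)^p = 2 * 2^(p-1)" using p1 by (cases p) auto
    have kkJ: "2*i+2 + kk = 2^M" using p(2) unfolding kk_def M_def by simp
    have kk_even: "even kk" unfolding kk_def PM by simp
    have "kk > 0" using kkJ p(2) unfolding M_def by simp
    then have kk2: "kk \<ge> 2" using kk_even by (elim evenE) simp
    have kkb: "kk \<le> 2^(M-1)" using kkJ p(1) unfolding M_def by simp
    have Wi: "int (W i) = int (2*h) - 2^M - (int n - int M) * int (2*i+2) + int M - 1 - int (multiplicity (2::nat) kk)"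
      unfolding W_def by (rule hypJ) (use kk2 kkb kk_even kkJ p1 pn in \<open>auto simp: M_def\<close>)
    have v1: "multiplicity (2::nat) kk \<ge> 1" using mult_even_ge[OF kk_even] kk2 by simp
    show ?thesis
    proof (cases "2*i+4 < 2^M")
      case True
      define kk' where "kk' = kk - 2"
      have kk'J: "2*(Suc i)+2 + kk' = 2^M" using kkJ kk2 True unfolding kk'_def by simp
      have "kk > 2" using kkJ True by simp
      then have "kk' > 0" "even kk'" using kk_even unfolding kk'_def by auto
      then have "kk' \<ge> 2" by (elim evenE) simp
      moreover have "even kk'" using kk_even kk2 unfolding kk'_def by simp
      moreover have "kk' \<le> 2^(M-1)" using kkb unfolding kk'_def by simp
      ultimately have Wi1: "int (W (Suc i)) = int (2*h) - 2^M - (int n - int M) * int (2*(Suc i)+2) + int M - 1 - int (multiplicity (2::nat) kk')"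
        unfolding W_def using kk'J p1 pn by (intro hypJ) (auto simp: M_def)
      have lt: "int (multiplicity (2::nat) kk') < int p"
        using mult_le_of_less[of kk' p] kk2 kkb \<open>kk' \<ge> 2\<close> unfolding kk'_def M_def by simp
      have ring1: "(int n - int M) * int (2*(Suc i)+2) = (int n - int M) * int (2*i+2) + 2 * (int n - int M)"
        by (simp add: algebra_simps)
      have dif: "int (W i) - int (W (Suc i)) = 2 * (int n - int M) + int (multiplicity (2::nat) kk') - int (multiplicity (2::nat) kk)"
        unfolding Wi Wi1 ring1 by (simp add: algebra_simps)
      have nm: "int n = int m + 1" "int M = int p + 1" using n M_def by simp_all
      have vv: "int (multiplicity (2::nat) kk) \<ge> 1" using v1 by simp
      define a where "a = int (multiplicity (2::nat) kk')"
      define b where "b = int (multiplicity (2::nat) kk)"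
      have "int (W i) \<le> int (W (Suc i)) + 2 * int m" using lt dif nm vv by presburger
      then show ?thesis by linarith
    next
      case False
      have eq: "2*i+4 = 2^M" using kkJ kk2 False by linarith
      then have kk_2: "kk = 2" using kkJ by simp
      have v2: "multiplicity (2::nat) 2 = 1" using multiplicity_same_power'[of "2::nat" 1] by simp
      have Mn: "M \<le> n" using pn unfolding M_def by simp
      show ?thesis
      proof (cases "M = n")
        case True
        have "int (W i) = int n - 2" using Wi Ni True v2 kk_2 by simp
        then show ?thesis using n by presburger
      next
        case False
        then have Mn': "Suc M \<le> n" using Mn by simp
        have M2: "M \<ge> 2" using p1 unfolding M_def by simp
        have "(2::nat)^1 \<le> 2^M" using M2 power_increasing[of 1 M "2::nat"] by simp
        then have Wi1: "int (W (Suc i)) = int (2*h) - 2^Suc M - (int n - int (Suc M)) * int (2*(Suc i)+2) + int (Suc M) - 1 - int (multiplicity (2::nat) ((2::nat)^M))"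
          unfolding W_def using M2 Mn' eq by (intro hypJ) auto
        have vM: "multiplicity (2::nat) ((2::nat)^M) = M" using multiplicity_same_power'[of "2::nat" M] by simp
        define P where "P = (2::int)^M"
        have P1: "int (2*(Suc i)+2) = P" "int (2*i+2) = P - 2" "(2::int)^Suc M = 2 * P"
          using arg_cong[OF eq, of int] unfolding P_def by simp_all
        have dif: "int (W i) - int (W (Suc i)) = 2*(int n - int M) + int M - 2"
          using Wi Wi1 vM v2 kk_2 unfolding P1 P_def[symmetric] by (simp add: algebra_simps)
        show ?thesis using dif n M2 by presburger
      qed
    qed
  qed
  have lip: "W i \<le> W j + 2*m*(j - i)" if "i \<le> j" "j < h" for i j
    using that
  proof (induction j)
    case 0 then show ?case by simp
  next
    case (Suc j)
    show ?case
    proof (cases "i = Suc j")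
      case True then show ?thesis by simp
    next
      case False
      then have ij: "i \<le> j" using Suc.prems by simp
      have "W i \<le> W j + 2*m*(j - i)" using Suc.IH ij Suc.prems by simp
      moreover have "W j \<le> W (Suc j) + 2*m" using step Suc.prems by simp
      moreover have "2*m*(Suc j - i) = 2*m*(j - i) + 2*m" using ij by (simp add: Suc_diff_le)
      ultimately show ?thesis by linarith
    qed
  qed
  have pdvd: "(2::int)^c dvd x * y" if "(2::int)^a dvd x" "(2::int)^b dvd y" "c \<le> a + b" for a b c x y
  proof -
    have "(2::int)^c dvd 2^(a+b)" using that(3) by (simp add: le_imp_power_dvd)
    also have "(2::int)^(a+b) dvd x * y" using that(1,2) by (simp add: power_add mult_dvd_mono)
    finally show ?thesis .
  qed
  have K: "ex2 (W i) (k i)" if "i < h" for i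
    using that
  proof (induction "h - i" arbitrary: i rule: less_induct)
    case less
    have split: "(\<Sum>r<h. k r * A r (2*i+2)) = k i * A i (2*i+2) + (\<Sum>r\<in>{..<h}-{i}. k r * A r (2*i+2))"
      using less.prems by (simp add: sum.remove)
    have A1: "A i (2*i+2) = 1" unfolding A_def by (rule A_lead)
    have R: "(2::int)^Suc (W i) dvd (\<Sum>r\<in>{..<h}-{i}. k r * A r (2*i+2))"
    proof (rule dvd_sum)
      fix r assume r: "r \<in> {..<h}-{i}"
      show "(2::int)^Suc (W i) dvd k r * A r (2*i+2)"
      proof (cases "r < i")
        case True then show ?thesis using A_low1 by (simp add: A_def)
      next
        case False
        then have "i < r" using r by auto
        then obtain e where re: "r = i + Suc e" using less_imp_Suc_add by fastforce
        have "ex2 (W r) (k r)" using less.hyps[of r] r \<open>i < r\<close> by auto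
        then have kd: "(2::int)^(W r) dvd k r" by (simp add: ex2_iff)
        have ad: "(2::int)^(2*m*e + 2*m + 2*e + 1) dvd A r (2*i+2)" unfolding A_def re by (rule A_dvd1)
        have "W i \<le> W r + 2*m*(r - i)" using lip[of i r] r \<open>i < r\<close> by auto
        then have "Suc (W i) \<le> W r + (2*m*e + 2*m + 2*e + 1)" using re by (simp add: algebra_simps)
        then show ?thesis by (rule pdvd[OF kd ad])
      qed
    qed
    have "int (stirling (2*h) (2*i+2)) = k i + (\<Sum>r\<in>{..<h}-{i}. k r * A r (2*i+2))"
      unfolding sid[of "2*i+2"] split A1 by simp
    then have "k i = int (stirling (2*h) (2*i+2)) + - (\<Sum>r\<in>{..<h}-{i}. k r * A r (2*i+2))" by simp
    moreover have "ex2 (W i) (int (stirling (2*h) (2*i+2)) + - (\<Sum>r\<in>{..<h}-{i}. k r * A r (2*i+2)))"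
      using Wex[OF less.prems] R by (intro ex2_add) simp_all
    ultimately show ?case by simp
  qed
  have final: "multiplicity (2::nat) (stirling (2*h) (2*i+1)) = W i + m" if "i < h" for i
  proof -
    have split: "(\<Sum>r<h. k r * A r (2*i+1)) = k i * A i (2*i+1) + (\<Sum>r\<in>{..<h}-{i}. k r * A r (2*i+1))"
      using that by (simp add: sum.remove)
    have "A i (2*i+1) = 2^m + int i * 2^Suc m" unfolding A_def by (rule A_sub)
    also have "\<dots> = 2^m * (2 * int i + 1)" by (simp add: algebra_simps)
    finally have "ex2 m (A i (2*i+1))" unfolding ex2_def by auto
    then have main: "ex2 (W i + m) (k i * A i (2*i+1))" using K[OF that] by (rule ex2_mult[rotated])
    have R: "(2::int)^Suc (W i + m) dvd (\<Sum>r\<in>{..<h}-{i}. k r * A r (2*i+1))"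
    proof (rule dvd_sum)
      fix r assume r: "r \<in> {..<h}-{i}"
      show "(2::int)^Suc (W i + m) dvd k r * A r (2*i+1)"
      proof (cases "r < i")
        case True then show ?thesis using A_low2 by (simp add: A_def)
      next
        case False
        then have "i < r" using r by auto
        then obtain e where re: "r = i + Suc e" using less_imp_Suc_add by fastforce
        have "ex2 (W r) (k r)" using K r by auto
        then have kd: "(2::int)^(W r) dvd k r" by (simp add: ex2_iff)
        have ad: "(2::int)^(2*m*e + 3*m + 2*e + 2) dvd A r (2*i+1)" unfolding A_def re by (rule A_dvd2)
        have "W i \<le> W r + 2*m*(r - i)" using lip[of i r] r \<open>i < r\<close> by auto
        then have "Suc (W i + m) \<le> W r + (2*m*e + 3*m + 2*e + 2)" using re by (simp add: algebra_simps)
        then show ?thesis by (rule pdvd[OF kd ad])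
      qed
    qed
    have "int (stirling (2*h) (2*i+1)) = k i * A i (2*i+1) + (\<Sum>r\<in>{..<h}-{i}. k r * A r (2*i+1))"
      unfolding sid[of "2*i+1"] split by simp
    moreover have "ex2 (W i + m) (k i * A i (2*i+1) + (\<Sum>r\<in>{..<h}-{i}. k r * A r (2*i+1)))"
      using main R by (rule ex2_add)
    ultimately show ?thesis by (intro ex2_multiplicity) simp
  qed
  show ?thesis
  proof (intro allI impI)
    fix i :: nat assume i: "1 \<le> i \<and> i \<le> 2 ^ (n - 1)"
    then obtain i' where i': "i = Suc i'" by (cases i) auto
    have "i' < h" using i i' unfolding h_def n by simp
    moreover have "2*i - 1 = 2*i'+1" "2*i = 2*i'+2" "n - 1 = m" using i' n by simp_all
    ultimately show "multiplicity (2::nat) (stirling (2 ^ n) (2 * i - 1))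
        = multiplicity (2::nat) (stirling (2 ^ n) (2 * i)) + (n - 1)"
      using final[of i'] unfolding N W_def by simp
  qed
qed

end
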